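(* Suppose Assumptions (A1) and (A2) hold. For every $C>0$ and every nonempty $\mathscr{S}\in\mathcal{A}(k)$, $$\inf_{T\in\mathcal{T}^{1/2}_{\mathscr{S}}}\sup_{\tau\in\mathrm{Lip}_C(\mathbb{R}^d)}\mathcal{R}(T,\mathscr{S},\tau)\ge\frac{C}{2}\,\frac{1}{\#\mathcal{S}_P}\sum_{s\in\mathcal{S}_P\setminus\mathscr{S}}\|X_s-X_{N_{\mathscr{S}}(s)}\|.$$
   Context: Sites are indexed by $\mathcal{S}=\{1,\dots,S\}$. $\mathcal{S}_E\subseteq\mathcal{S}$ has $\mathrm{card}(\mathcal{S}_E)\ge2$, and $\mathcal{S}_P\subseteq\mathcal{S}$ is nonempty, with $\#\mathcal{S}_P=\mathrm{card}(\mathcal{S}_P)$. Each site $s$ has covariates $X_s\in\mathbb{R}^d$ and a known standard deviation $\sigma_s>0$. $\|\cdot\|$ is the Euclidean norm, and $\mathrm{Lip}_C(\mathbb{R}^d)$ is the set of $C$-Lipschitz functions $\mathbb{R}^d\to\mathbb{R}$ with respect to $\|\cdot\|$. (A1): the true conditional treatment effect function $\tau$ lies in $\mathrm{Lip}_C(\mathbb{R}^d)$. (A2): the $X_s$ are pairwise distinct. Fix an integer $1\le k<\mathrm{card}(\mathcal{S}_E)$ and set $\mathcal{A}(k)=\{\mathscr{S}\subset\mathcal{S}_E:\mathrm{card}(\mathscr{S})\le k\}$. For a nonempty $\mathscr{S}$ with elements $\mathscr{S}_1<\dots<\mathscr{S}_m$, the data are $\hat\tau_{\mathscr{S}}\sim\mathcal{N}_m(\tau_{\mathscr{S}},\mathrm{diag}(\sigma^2_{\mathscr{S}_1},\dots,\sigma^2_{\mathscr{S}_m}))$,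 where $\tau_{\mathscr{S}}=(\tau(X_{\mathscr{S}_i}))_{i=1}^m$. A treatment rule is a measurable map $T:\mathbb{R}^m\to[0,1]^{\#\mathcal{S}_P}$ with components $T_s$, $s\in\mathcal{S}_P$. $\mathcal{T}^{1/2}_{\mathscr{S}}$ is the set of treatment rules with $\mathbb{E}[T_s(U)]=1/2$ for all $s\in\mathcal{S}_P$ whenever $U\sim\mathcal{N}_m(0,\Sigma)$, for every positive definite diagonal $\Sigma$. Regret is $\mathcal{R}(T,\mathscr{S},\tau)=\frac{1}{\#\mathcal{S}_P}\sum_{s\in\mathcal{S}_P}\tau(X_s)\big(\mathbf{1}\{\tau(X_s)\ge0\}-\mathbb{E}_{\tau_{\mathscr{S}}}[T_s(\hat\tau_{\mathscr{S}})]\big)$. $N_{\mathscr{S}}(s)$ is the nearest neighbor of $s$ in $\mathscr{S}$ in Euclidean distance of covariates, with the smallest index chosen under ties. *)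

theory Defs
  imports "HOL-Analysis.Analysis" "HOL-Probability.Probability"
begin

text \<open>Sites are natural numbers; a vector in R^m indexed by the sites of a set Ss
  is a function nat => real (extensional on Ss), i.e. an element of the product space.\<close>

definition gauss_meas :: "nat set \<Rightarrow> (nat \<Rightarrow> real) \<Rightarrow> (nat \<Rightarrow> real) \<Rightarrow> (nat \<Rightarrow> real) measure" where
  "gauss_meas Ss mu sd = PiM Ss (\<lambda>i. density lborel (normal_density (mu i) (sd i)))"

definition treatment_rule :: "nat set \<Rightarrow> nat set \<Rightarrow> ((nat \<Rightarrow> real) \<Rightarrow> nat \<Rightarrow> real) \<Rightarrow> bool" where
  "treatment_rule Ss SP T \<longleftrightarrow>
     (\<forall>s\<in>SP. (\<lambda>u. T u s) \<in> borel_measurable (PiM Ss (\<lambda>_. lborel))) \<and>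
     (\<forall>u\<in>space (PiM Ss (\<lambda>_. lborel)). \<forall>s\<in>SP. 0 \<le> T u s \<and> T u s \<le> 1)"

definition half_rules :: "nat set \<Rightarrow> nat set \<Rightarrow> ((nat \<Rightarrow> real) \<Rightarrow> nat \<Rightarrow> real) set" where
  "half_rules Ss SP = {T. treatment_rule Ss SP T \<and>
     (\<forall>sd. (\<forall>i\<in>Ss. sd i > 0) \<longrightarrow>
        (\<forall>s\<in>SP. integral\<^sup>L (gauss_meas Ss (\<lambda>_. 0) sd) (\<lambda>u. T u s) = 1/2))}"

definition regret :: "nat set \<Rightarrow> (nat \<Rightarrow> 'a) \<Rightarrow> (nat \<Rightarrow> real) \<Rightarrow> ((nat \<Rightarrow> real) \<Rightarrow> nat \<Rightarrow> real)
    \<Rightarrow> nat set \<Rightarrow> ('a \<Rightarrow> real) \<Rightarrow> real" where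
  "regret SP X sd T Ss tau =
     (1 / real (card SP)) * (\<Sum>s\<in>SP. tau (X s) *
        ((if tau (X s) \<ge> 0 then 1 else 0)
         - integral\<^sup>L (gauss_meas Ss (\<lambda>i. tau (X i)) sd) (\<lambda>u. T u s)))"

definition nn_site :: "nat set \<Rightarrow> (nat \<Rightarrow> 'a::metric_space) \<Rightarrow> nat \<Rightarrow> nat" where
  "nn_site Ss X s = (LEAST j. j \<in> Ss \<and> (\<forall>i\<in>Ss. dist (X s) (X j) \<le> dist (X s) (X i)))"

end

theory Submission
  imports Defs
begin

lemma infdist_lip: "1-lipschitz_on UNIV (\<lambda>x. infdist x A)"
proof (rule lipschitz_onI)
  fix x y
  have "infdist x A \<le> infdist y A + dist x y" by (rule infdist_triangle)
  moreover have "infdist y A \<le> infdist x A + dist y x" by (rule infdist_triangle)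
  ultimately show "dist (infdist x A) (infdist y A) \<le> 1 * dist x y"
    by (simp add: dist_real_def dist_commute abs_le_iff)
qed simp

theorem lemma2:
  fixes S :: nat and SE SP Ss :: "nat set" and X :: "nat \<Rightarrow> real ^ 'd"
    and sd :: "nat \<Rightarrow> real" and k :: nat and C :: real
  assumes SE_sub: "SE \<subseteq> {1..S}" and SE_card: "card SE \<ge> 2"
    and SP_sub: "SP \<subseteq> {1..S}" and SP_ne: "SP \<noteq> {}"
    and sd_pos: "\<forall>s\<in>{1..S}. sd s > 0"
    and A2: "inj_on X {1..S}"
    and k1: "1 \<le> k" and k2: "k < card SE"
    and C_pos: "C > 0"
    and Ss_sub: "Ss \<subseteq> SE" and Ss_card: "card Ss \<le> k" and Ss_ne: "Ss \<noteq> {}"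
  shows "(INF T\<in>half_rules Ss SP. SUP tau\<in>{tau. C-lipschitz_on UNIV tau}. ereal (regret SP X sd T Ss tau))
           \<ge> ereal (C / 2 * (1 / real (card SP)) *
                (\<Sum>s\<in>SP - Ss. norm (X s - X (nn_site Ss X s))))"
proof (rule INF_greatest)
  fix T assume T: "T \<in> half_rules Ss SP"
  define tau where "tau = (\<lambda>x. C * infdist x (X ` Ss))"
  have lip: "C-lipschitz_on UNIV tau"
    using lipschitz_on_cmult_real_nonneg[OF infdist_lip, of C "X ` Ss"] C_pos
    by (simp add: tau_def)
  have finSs: "finite Ss" using finite_subset[OF subset_trans[OF Ss_sub SE_sub]] by simp
  have finSP: "finite SP" using finite_subset[OF SP_sub] by simp
  have meas: "gauss_meas Ss (\<lambda>i. tau (X i)) sd = gauss_meas Ss (\<lambda>_. 0) sd"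
    unfolding gauss_meas_def by (rule PiM_cong) (auto simp: tau_def)
  have sdSs: "\<forall>i\<in>Ss. sd i > 0" using sd_pos Ss_sub SE_sub by blast
  have half: "\<And>s. s \<in> SP \<Longrightarrow> integral\<^sup>L (gauss_meas Ss (\<lambda>_. 0) sd) (\<lambda>u. T u s) = 1/2"
    using T sdSs unfolding half_rules_def by blast
  have taunn: "\<And>x. tau x \<ge> 0" using C_pos by (simp add: tau_def infdist_nonneg)
  have nn: "\<And>s. nn_site Ss X s \<in> Ss \<and> (\<forall>i\<in>Ss. dist (X s) (X (nn_site Ss X s)) \<le> dist (X s) (X i))"
  proof -
    fix s
    obtain j where j: "j \<in> Ss" "\<forall>i\<in>Ss. dist (X s) (X j) \<le> dist (X s) (X i)"
    proof -
      have "finite ((\<lambda>i. dist (X s) (X i)) ` Ss)" "(\<lambda>i. dist (X s) (X i)) ` Ss \<noteq> {}"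
        using finSs Ss_ne by auto
      then have "Min ((\<lambda>i. dist (X s) (X i)) ` Ss) \<in> (\<lambda>i. dist (X s) (X i)) ` Ss"
        by (rule Min_in)
      then obtain j where "j \<in> Ss" "dist (X s) (X j) = Min ((\<lambda>i. dist (X s) (X i)) ` Ss)" by auto
      moreover have "\<forall>i\<in>Ss. Min ((\<lambda>i. dist (X s) (X i)) ` Ss) \<le> dist (X s) (X i)"
        using finSs by auto
      ultimately show ?thesis using that by auto
    qed
    show "?thesis s" unfolding nn_site_def
      by (rule LeastI[of "\<lambda>j. j \<in> Ss \<and> (\<forall>i\<in>Ss. dist (X s) (X j) \<le> dist (X s) (X i))"]) (use j in auto)
  qed
  have tauval: "tau (X s) = C * norm (X s - X (nn_site Ss X s))" for s
  proof -
    have "infdist (X s) (X ` Ss) = dist (X s) (X (nn_site Ss X s))"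
    proof (rule antisym)
      show "infdist (X s) (X ` Ss) \<le> dist (X s) (X (nn_site Ss X s))"
        using nn[of s] by (simp add: infdist_le)
      show "dist (X s) (X (nn_site Ss X s)) \<le> infdist (X s) (X ` Ss)"
      proof -
        have ne: "X ` Ss \<noteq> {}" using Ss_ne by blast
        have e: "infdist (X s) (X ` Ss) = (INF a\<in>X ` Ss. dist (X s) a)"
          using ne by (simp add: infdist_def)
        show ?thesis unfolding e
      proof (rule cINF_greatest)
        show "X ` Ss \<noteq> {}" using Ss_ne by blast
        fix y assume "y \<in> X ` Ss"
        then obtain i where i: "i \<in> Ss" "y = X i" by blast
        show "dist (X s) (X (nn_site Ss X s)) \<le> dist (X s) y"
          using nn[of s] i by simp
      qed
      qed
    qed
    then show ?thesis by (simp add: tau_def dist_norm)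
  qed
  have reg: "regret SP X sd T Ss tau = (1 / real (card SP)) * (\<Sum>s\<in>SP. tau (X s) / 2)"
    unfolding regret_def meas
  proof (intro arg_cong[where f="\<lambda>x. 1 / real (card SP) * x"] sum.cong refl)
    fix s assume "s \<in> SP"
    then show "tau (X s) * ((if 0 \<le> tau (X s) then 1 else 0) - integral\<^sup>L (gauss_meas Ss (\<lambda>_. 0) sd) (\<lambda>u. T u s)) = tau (X s) / 2"
      using taunn[of "X s"] half[of s] by simp
  qed
  have "(\<Sum>s\<in>SP - Ss. tau (X s) / 2) \<le> (\<Sum>s\<in>SP. tau (X s) / 2)"
    using finSP taunn by (intro sum_mono2) auto
  moreover have "(\<Sum>s\<in>SP - Ss. tau (X s) / 2) = C / 2 * (\<Sum>s\<in>SP - Ss. norm (X s - X (nn_site Ss X s)))"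
    by (simp add: tauval sum_distrib_left)
  ultimately have "(1 / real (card SP)) * (C / 2 * (\<Sum>s\<in>SP - Ss. norm (X s - X (nn_site Ss X s))))
      \<le> (1 / real (card SP)) * (\<Sum>s\<in>SP. tau (X s) / 2)"
    by (intro mult_left_mono) auto
  then have "C / 2 * (1 / real (card SP)) * (\<Sum>s\<in>SP - Ss. norm (X s - X (nn_site Ss X s)))
      \<le> regret SP X sd T Ss tau"
    unfolding reg by (simp only: ac_simps)
  then have "ereal (C / 2 * (1 / real (card SP)) * (\<Sum>s\<in>SP - Ss. norm (X s - X (nn_site Ss X s))))
      \<le> ereal (regret SP X sd T Ss tau)" by simp
  also have "\<dots> \<le> (SUP tau\<in>{tau. C-lipschitz_on UNIV tau}. ereal (regret SP X sd T Ss tau))"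
    using lip by (intro SUP_upper) auto
  finally show "ereal (C / 2 * (1 / real (card SP)) * (\<Sum>s\<in>SP - Ss. norm (X s - X (nn_site Ss X s))))
      \<le> (SUP tau\<in>{tau. C-lipschitz_on UNIV tau}. ereal (regret SP X sd T Ss tau))" .
qed

end
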